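(* As $m\to\infty$ through the positive integers, $$\gamma_1\!\left(\tfrac{1}{m}\right)+m\ln m\to\gamma_1,\qquad \gamma_2\!\left(\tfrac{1}{m}\right)-m\ln^2 m\to\gamma_2.$$
   Context: The Stieltjes constants $\gamma_k(a)$ are defined by the Laurent expansion of the Hurwitz zeta function $\zeta(s,a)=\frac{1}{s-1}+\sum_{n=0}^\infty \frac{(-1)^n}{n!}\gamma_n(a)(s-1)^n$ about $s=1$; $\gamma_k:=\gamma_k(1)$. *)

theory Defs
  imports "HOL-Analysis.Analysis"
begin

text \<open>Hurwitz zeta function on the half-line of convergence s > 1 (real s, a > 0).\<close>
definition hurwitz_zeta_real :: "real \<Rightarrow> real \<Rightarrow> real" where
  "hurwitz_zeta_real s a = (\<Sum>k. (real k + a) powr (-s))"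

text \<open>Stieltjes constants via the Laurent expansion about s = 1:
  zeta(s,a) - 1/(s-1) is analytic at 1 with Taylor coefficients (-1)^n gamma_n(a)/n!,
  hence gamma_n(a) = (-1)^n g^(n)(1) where g(s) = zeta(s,a) - 1/(s-1); the value
  g^(n)(1) is obtained as the limit of g^(n)(s) as s tends to 1 from the right.\<close>
definition stieltjes :: "nat \<Rightarrow> real \<Rightarrow> real" where
  "stieltjes n a = (-1) ^ n *
     Lim (at_right 1) ((deriv ^^ n) (\<lambda>s. hurwitz_zeta_real s a - 1 / (s - 1)))"

end

theory Submission
  imports Defs "HOL-Complex_Analysis.Complex_Analysis"
begin

lemma term_bound:
  fixes x y :: real and z :: complex
  assumes x1: "1 \<le> x" and xy: "x \<le> y" and z: "z \<in> cball 1 (1/2)"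
  shows "norm (of_real y powr (-z) - of_real x powr (-z)) \<le> (y - x) * (3/2) * x powr (-3/2)"
proof -
  have zn: "norm z \<le> 3/2"
    using z norm_triangle_ineq[of 1 "z-1"] by (auto simp: dist_norm norm_minus_commute)
  have zr: "Re z \<ge> 1/2"
    using z abs_Re_le_cmod[of "z-1"] by (auto simp: dist_norm norm_minus_commute)
  let ?S = "closed_segment (complex_of_real x) (of_real y)"
  have S: "w \<in> ?S \<Longrightarrow> \<exists>t. w = of_real t \<and> x \<le> t \<and> t \<le> y" for w
    using xy by (auto simp: closed_segment_of_real closed_segment_eq_real_ivl)
  have "norm ((\<lambda>w. w powr (-z)) (of_real y) - (\<lambda>w. w powr (-z)) (of_real x))
        \<le> ((3/2) * x powr (-3/2)) * norm (complex_of_real y - of_real x)"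
  proof (rule field_differentiable_bound[where f' = "\<lambda>w. (-z) * w powr (-z - 1)"])
    show "convex ?S" by simp
    show "((\<lambda>w. w powr (-z)) has_field_derivative (-z) * w powr (-z - 1)) (at w within ?S)"
      if w: "w \<in> ?S" for w
    proof -
      obtain t where t: "w = of_real t" "x \<le> t" "t \<le> y" using S[OF w] by blast
      have "w \<notin> \<real>\<^sub>\<le>\<^sub>0" using t x1 by (auto simp: complex_nonpos_Reals_iff)
      from has_field_derivative_powr[OF this, of "-z"] show ?thesis
        using has_field_derivative_at_within by blast
    qed
    show "norm ((-z) * w powr (-z - 1)) \<le> (3/2) * x powr (-3/2)" if w: "w \<in> ?S" for w
    proof -
      obtain t where t: "w = of_real t" "x \<le> t" "t \<le> y" using S[OF w] by blast
      have t0: "0 < t" using t x1 by simp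
      have "norm (w powr (-z - 1)) = t powr (- Re z - 1)"
        using t t0 by (simp add: norm_powr_real_powr)
      also have "\<dots> \<le> x powr (- Re z - 1)"
        using t x1 zr by (intro powr_mono2') auto
      also have "\<dots> \<le> x powr (-3/2)"
        using x1 zr by (intro powr_mono) auto
      finally have "norm (w powr (-z - 1)) \<le> x powr (-3/2)" .
      then show ?thesis
        unfolding norm_mult norm_minus_cancel using zn by (intro mult_mono) auto
    qed
    show "of_real y \<in> ?S" "of_real x \<in> ?S" by auto
  qed
  moreover have "norm (complex_of_real y - of_real x) = y - x"
    using xy by (metis abs_of_nonneg diff_ge_0_iff_ge norm_of_real of_real_diff)
  ultimately show ?thesis by (simp add: algebra_simps)
qed

definition hzt :: "real \<Rightarrow> real \<Rightarrow> nat \<Rightarrow> complex \<Rightarrow> complex" where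
  "hzt a b k z = of_real (real k + a) powr (-z) - of_real (real k + b) powr (-z)"

definition Dc :: "real \<Rightarrow> real \<Rightarrow> complex \<Rightarrow> complex" where
  "Dc a b z = (\<Sum>k. hzt a b k z)"

lemma hzt_bound:
  assumes "0 \<le> a" "0 \<le> b" "1 \<le> real k + min a b" "z \<in> cball 1 (1/2)"
  shows "norm (hzt a b k z) \<le> \<bar>a - b\<bar> * (3/2) * (real k + min a b) powr (-3/2)"
proof (cases "a \<le> b")
  case True
  then have "norm (hzt a b k z) = norm (of_real (real k + b) powr (-z) - of_real (real k + a) powr (-z))"
    by (simp add: hzt_def norm_minus_commute)
  also have "\<dots> \<le> ((real k + b) - (real k + a)) * (3/2) * (real k + a) powr (-3/2)"
    using assms True by (intro term_bound) (auto simp: min_def)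
  also have "((real k + b) - (real k + a)) * (3/2) * (real k + a) powr (-3/2) = \<bar>a - b\<bar> * (3/2) * (real k + min a b) powr (-3/2)"
    using True by (simp add: min_def)
  finally show ?thesis .
next
  case False
  then have "norm (hzt a b k z) \<le> ((real k + a) - (real k + b)) * (3/2) * (real k + b) powr (-3/2)"
    unfolding hzt_def using assms by (intro term_bound) (auto simp: min_def)
  also have "((real k + a) - (real k + b)) * (3/2) * (real k + b) powr (-3/2) = \<bar>a - b\<bar> * (3/2) * (real k + min a b) powr (-3/2)"
    using False by (simp add: min_def)
  finally show ?thesis .
qed

lemma summable_k32: "summable (\<lambda>k. real k powr (-3/2))"
  using summable_real_powr_iff[of "-3/2"] by simp

lemma Dc_holo:
  assumes "0 \<le> a" "0 \<le> b"
  shows "Dc a b holomorphic_on ball 1 (1/2)" "continuous_on (cball 1 (1/2)) (Dc a b)"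
proof -
  have ul: "uniform_limit (cball 1 (1/2)) (\<lambda>n z. \<Sum>k<n. hzt a b k z) (\<lambda>z. \<Sum>k. hzt a b k z) sequentially"
  proof (rule Weierstrass_m_test_ev)
    show "\<forall>\<^sub>F k in sequentially. \<forall>z\<in>cball 1 (1/2). norm (hzt a b k z) \<le> \<bar>a-b\<bar> * (3/2) * real k powr (-3/2)"
      using eventually_ge_at_top[of "1::nat"]
    proof eventually_elim
      case (elim k)
      show ?case
      proof
        fix z :: complex assume z: "z \<in> cball 1 (1/2)"
        have "norm (hzt a b k z) \<le> \<bar>a - b\<bar> * (3/2) * (real k + min a b) powr (-3/2)"
          using assms elim z by (intro hzt_bound) auto
        also have "\<dots> \<le> \<bar>a - b\<bar> * (3/2) * real k powr (-3/2)"
          using assms elim by (intro mult_left_mono powr_mono2') auto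
        finally show "norm (hzt a b k z) \<le> \<bar>a-b\<bar> * (3/2) * real k powr (-3/2)" .
      qed
    qed
    show "summable (\<lambda>k. \<bar>a-b\<bar> * (3/2) * real k powr (-3/2))"
      using summable_k32 by (intro summable_mult)
  qed
  have hol: "(\<lambda>z. \<Sum>k<n. hzt a b k z) holomorphic_on UNIV" for n
    unfolding hzt_def by (intro holomorphic_intros)
  have ev: "\<forall>\<^sub>F n in sequentially. continuous_on (cball 1 (1/2)) (\<lambda>z. \<Sum>k<n. hzt a b k z) \<and> (\<lambda>z. \<Sum>k<n. hzt a b k z) holomorphic_on ball 1 (1/2)"
    using hol by (auto intro!: always_eventually holomorphic_on_imp_continuous_on intro: holomorphic_on_subset)
  obtain "continuous_on (cball 1 (1/2)) (\<lambda>z. \<Sum>k. hzt a b k z)" "(\<lambda>z. \<Sum>k. hzt a b k z) holomorphic_on ball 1 (1/2)"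
    using holomorphic_uniform_limit[OF ev ul] by auto
  then show "Dc a b holomorphic_on ball 1 (1/2)" "continuous_on (cball 1 (1/2)) (Dc a b)"
    unfolding Dc_def[abs_def] by auto
qed

lemma summable_Suc32: "summable (\<lambda>k. real (Suc k) powr (-3/2))"
  using summable_k32 summable_Suc_iff[where f="\<lambda>k. real k powr (-3/2)"] by simp

lemma Dc_small:
  assumes "0 \<le> h" "z \<in> cball 1 (1/2)"
  shows "norm (Dc (1+h) 1 z) \<le> h * (3/2 * (\<Sum>k. real (Suc k) powr (-3/2)))"
proof -
  have "norm (Dc (1+h) 1 z) \<le> (\<Sum>k. h * (3/2) * real (Suc k) powr (-3/2))"
    unfolding Dc_def
  proof (rule norm_suminf_le)
    show "norm (hzt (1+h) 1 k z) \<le> h * (3/2) * real (Suc k) powr (-3/2)" for k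
    proof -
      have m: "min (1+h) (1::real) = 1" using assms by simp
      show ?thesis using hzt_bound[of "1+h" 1 k z, unfolded m] assms by (simp add: add_ac)
    qed
    show "summable (\<lambda>k. h * (3/2) * real (Suc k) powr (-3/2))"
      using summable_Suc32 by (intro summable_mult)
  qed
  also have "\<dots> = h * (3/2 * (\<Sum>k. real (Suc k) powr (-3/2)))"
    using suminf_mult[OF summable_Suc32, of "h * (3/2)"] by (simp add: mult_ac)
  finally show ?thesis .
qed

lemma hz_summable:
  assumes "1 < s" "0 < a"
  shows "summable (\<lambda>k. (real k + a) powr (-s))"
proof (rule summable_comparison_test'[where N=1])
  show "summable (\<lambda>k. real k powr (-s))"
    using summable_real_powr_iff[of "-s"] assms by simp
  show "norm ((real k + a) powr (-s)) \<le> real k powr (-s)" if "k \<ge> 1" for k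
    using that assms by (auto intro!: powr_mono2')
qed

lemma powr_of_real':
  "0 \<le> x \<Longrightarrow> complex_of_real x powr (- complex_of_real y) = of_real (x powr (-y))"
  using powr_of_real[of x "-y"] by simp

lemma Dc_real:
  assumes "1 < s" "0 < a" "0 < b"
  shows "Dc a b (of_real s) = of_real (hurwitz_zeta_real s a - hurwitz_zeta_real s b)"
proof -
  have eq: "hzt a b k (of_real s) = of_real ((real k + a) powr (-s) - (real k + b) powr (-s))" for k
  proof -
    have "0 \<le> real k + a" "0 \<le> real k + b" using assms by auto
    then show ?thesis unfolding hzt_def by (simp only: powr_of_real' of_real_diff)
  qed
  have "(\<lambda>k. (real k + a) powr (-s) - (real k + b) powr (-s)) sums
          (hurwitz_zeta_real s a - hurwitz_zeta_real s b)"
    unfolding hurwitz_zeta_real_def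
    using assms by (intro sums_diff summable_sums hz_summable)
  from sums_of_real[OF this, where 'a=complex] show ?thesis
    unfolding Dc_def eq by (simp add: sums_iff)
qed

lemma hz_shift:
  assumes "1 < s" "0 < a"
  shows "hurwitz_zeta_real s a = a powr (-s) + hurwitz_zeta_real s (a+1)"
proof -
  have "hurwitz_zeta_real s (a+1) = (\<Sum>n. (real (Suc n) + a) powr (-s))"
    unfolding hurwitz_zeta_real_def by (simp add: add_ac)
  also have "\<dots> = hurwitz_zeta_real s a - a powr (-s)"
    unfolding hurwitz_zeta_real_def
    using suminf_split_head[OF hz_summable[OF assms]] by simp
  finally show ?thesis by simp
qed

lemma hz_half:
  assumes s: "1 < s"
  shows "hurwitz_zeta_real s (1/2) = (2 powr s - 1) * hurwitz_zeta_real s 1"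
proof -
  define f where "f = (\<lambda>k. (real k + 1) powr (-s))"
  define Z where "Z = hurwitz_zeta_real s 1"
  define H where "H = hurwitz_zeta_real s (1/2)"
  have "f sums Z" unfolding f_def Z_def hurwitz_zeta_real_def
    using s by (intro summable_sums hz_summable) auto
  from sums_group[OF this, of 2]
  have 1: "(\<lambda>n. sum f {n * 2..<n * 2 + 2}) sums Z" by simp
  have eq: "sum f {n * 2..<n * 2 + 2} = 2 powr (-s) * ((real n + 1/2) powr (-s) + (real n + 1) powr (-s))" for n
  proof -
    have "sum f {n * 2..<n * 2 + 2} = f (2*n) + f (2*n+1)"
      by (simp add: numeral_2_eq_2 mult.commute)
    also have "f (2*n) = (2 * (real n + 1/2)) powr (-s)"
      unfolding f_def by (simp add: algebra_simps)
    also have "\<dots> = 2 powr (-s) * (real n + 1/2) powr (-s)"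
      by (rule powr_mult; simp)
    also have "f (2*n+1) = (2 * (real n + 1)) powr (-s)"
      unfolding f_def by (simp add: algebra_simps)
    also have "\<dots> = 2 powr (-s) * (real n + 1) powr (-s)"
      by (rule powr_mult; simp)
    finally show ?thesis by (simp add: algebra_simps)
  qed
  have 2: "(\<lambda>n. 2 powr (-s) * ((real n + 1/2) powr (-s) + (real n + 1) powr (-s))) sums (2 powr (-s) * (H + Z))"
    unfolding H_def Z_def hurwitz_zeta_real_def
    using s by (intro sums_mult sums_add summable_sums hz_summable) auto
  from 1 2 have "Z = 2 powr (-s) * (H + Z)" unfolding eq using sums_unique2 by blast
  then have "2 powr s * Z = H + Z"
    by (simp add: powr_minus field_simps)
  then show ?thesis unfolding H_def Z_def by (simp add: algebra_simps)
qed

lemma hzt_real: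
  assumes "0 < a" "0 < b"
  shows "hzt a b k (of_real s) = of_real ((real k + a) powr (-s) - (real k + b) powr (-s))"
proof -
  have "0 \<le> real k + a" "0 \<le> real k + b" using assms by auto
  then show ?thesis unfolding hzt_def by (simp only: powr_of_real' of_real_diff)
qed

definition E2 :: "complex \<Rightarrow> complex" where
  "E2 z = (if z = 1 then deriv (\<lambda>z. (2::complex) powr z) 1 else ((2::complex) powr z - 2 powr 1) / (z - 1))"

lemma two_powr_one: "(2::complex) powr 1 = 2"
  by (simp add: powr_def)

lemma E2_holo: "E2 holomorphic_on UNIV"
proof -
  have "(\<lambda>z. (2::complex) powr z) holomorphic_on UNIV" by (intro holomorphic_intros)
  from pole_lemma[OF this, of 1] show ?thesis unfolding E2_def[abs_def] by simp
qed

lemma E2_1: "E2 1 = of_real (2 * ln 2)"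
proof -
  have "E2 1 = deriv (\<lambda>z. (2::complex) powr z) 1" by (simp add: E2_def)
  also have "\<dots> = Ln 2 * 2 powr 1"
    by (rule DERIV_imp_deriv, rule has_field_derivative_powr_right) simp
  also have "Ln (2::complex) = of_real (ln 2)" using Ln_of_real[of 2] by simp
  finally show ?thesis by (simp add: two_powr_one)
qed

lemma E2_real: "s \<noteq> 1 \<Longrightarrow> E2 (of_real s) = of_real ((2 powr s - 2) / (s - 1))"
  using powr_of_real[of 2 s] by (simp add: E2_def two_powr_one)

lemma Dc_half_1: "Dc (1/2) 1 1 = of_real (2 * ln 2)"
proof -
  have eq: "hzt (1/2) 1 k 1 = of_real (2 * (inverse (real (2*k+1)) - inverse (real (2*k+2))))" for k
  proof -
    have a: "(real k + 1/2) powr (-1) = 2 * inverse (real (2*k+1))"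
      by (simp add: powr_neg_one field_simps)
    have b: "(real k + 1) powr (-1) = 2 * inverse (real (2*k+2))"
      by (simp add: powr_neg_one field_simps)
    have r: "(real k + 1/2) powr (-1) - (real k + 1) powr (-1) = 2 * (inverse (real (2*k+1)) - inverse (real (2*k+2)))"
      unfolding a b by (simp add: algebra_simps)
    have "hzt (1/2) 1 k 1 = hzt (1/2) 1 k (of_real 1)" by simp
    also have "\<dots> = of_real ((real k + 1/2) powr (-1) - (real k + 1) powr (-1))"
      by (rule hzt_real) auto
    also have "\<dots> = of_real (2 * (inverse (real (2*k+1)) - inverse (real (2*k+2))))"
      by (simp only: r)
    finally show ?thesis .
  qed
  have "(\<lambda>k. 2 * (inverse (real (2*k+1)) - inverse (real (2*k+2)))) sums (2 * ln 2)"
    by (rule sums_mult[OF alternating_harmonic_series_sums'])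
  from sums_of_real[OF this, where 'a=complex] show ?thesis
    unfolding Dc_def eq by (simp add: sums_iff)
qed

lemma G_exists:
  "\<exists>G r. 0 < r \<and> r \<le> 1/2 \<and> G holomorphic_on ball 1 r \<and>
     (\<forall>s. 1 < s \<and> s < 1 + r \<longrightarrow> G (of_real s) = of_real (hurwitz_zeta_real s 1 - 1/(s-1)))"
proof -
  define P where "P z = Dc (1/2) 1 z - E2 z" for z
  have Pholo: "P holomorphic_on ball 1 (1/2)"
    unfolding P_def[abs_def] using Dc_holo(1)[of "1/2" 1] E2_holo
    by (intro holomorphic_intros) (auto intro: holomorphic_on_subset)
  have P1: "P 1 = 0" by (simp add: P_def Dc_half_1 E2_1)
  define Q where "Q z = (if z = 1 then deriv P 1 else (P z - P 1) / (z - 1))" for z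
  have Qholo: "Q holomorphic_on ball 1 (1/2)"
    unfolding Q_def[abs_def] by (rule pole_lemma[OF Pholo]) simp
  have cont: "continuous (at 1) E2"
    using E2_holo holomorphic_on_imp_continuous_on continuous_on_eq_continuous_at by blast
  have "E2 1 \<noteq> 0" by (simp add: E2_1)
  from continuous_at_avoid[OF cont this] obtain e where e: "e > 0" "\<forall>y. dist 1 y < e \<longrightarrow> E2 y \<noteq> 0"
    by blast
  define r where "r = min e (1/2)"
  define G where "G z = Q z / E2 z" for z
  have "G holomorphic_on ball 1 r"
    unfolding G_def[abs_def] using Qholo E2_holo e
    by (intro holomorphic_on_divide) (auto simp: r_def intro: holomorphic_on_subset)
  moreover have "G (of_real s) = of_real (hurwitz_zeta_real s 1 - 1/(s-1))" if s: "1 < s" "s < 1 + r" for s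
  proof -
    define Z where "Z = hurwitz_zeta_real s 1"
    have s1: "of_real s \<noteq> (1::complex)" using s by simp
    have "2 powr 1 < 2 powr s" using s by (intro powr_less_mono) auto
    then have t: "2 powr s - 2 \<noteq> (0::real)" by simp
    have re: "hurwitz_zeta_real s (1/2) - hurwitz_zeta_real s 1 = (2 powr s - 2) * Z"
      using hz_half[of s] s by (simp add: Z_def algebra_simps)
    have D: "Dc (1/2) 1 (of_real s) = of_real ((2 powr s - 2) * Z)"
    proof -
      have "Dc (1/2) 1 (of_real s) = of_real (hurwitz_zeta_real s (1/2) - hurwitz_zeta_real s 1)"
        by (rule Dc_real) (use s in auto)
      then show ?thesis by (simp only: re)
    qed
    have Es: "E2 (of_real s) = of_real ((2 powr s - 2) / (s - 1))"
      by (rule E2_real) (use s in auto)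
    have Ps: "P (of_real s) = of_real ((2 powr s - 2) * Z - (2 powr s - 2) / (s - 1))"
      by (simp only: P_def D Es of_real_diff)
    have Qs: "Q (of_real s) = of_real (((2 powr s - 2) * Z - (2 powr s - 2) / (s - 1)) / (s - 1))"
      using s1 by (simp only: Q_def if_False Ps P1 diff_zero of_real_divide of_real_diff of_real_1)
    have X: "((2 powr s - 2) * Z - (2 powr s - 2) / (s - 1)) / (s - 1) / ((2 powr s - 2) / (s - 1)) = Z - 1/(s-1)"
    proof -
      have alg: "((u * Z - u / v) / v / (u / v)) = Z - 1 / v" if "u \<noteq> 0" "v \<noteq> 0" for u v :: real
        using that by (simp add: field_simps)
      have "s - 1 \<noteq> 0" using s by simp
      from alg[OF t this] show ?thesis .
    qed
    have "G (of_real s) = of_real (((2 powr s - 2) * Z - (2 powr s - 2) / (s - 1)) / (s - 1) / ((2 powr s - 2) / (s - 1)))"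
      by (simp only: G_def Qs Es of_real_divide)
    then have "G (of_real s) = of_real (Z - 1/(s-1))" by (simp only: X)
    then show ?thesis by (simp only: Z_def)
  qed
  ultimately show ?thesis using e by (intro exI[of _ G] exI[of _ r]) (auto simp: r_def)
qed

lemma stieltjes_holo:
  assumes r: "0 < r" and hol: "F holomorphic_on ball 1 r"
    and eq: "\<And>x. 1 < x \<Longrightarrow> x < 1 + r \<Longrightarrow> F (of_real x) = of_real (hurwitz_zeta_real x a - 1/(x-1))"
  shows "stieltjes n a = (-1)^n * Re ((deriv ^^ n) F 1)"
proof -
  define f where "f = (\<lambda>s. hurwitz_zeta_real s a - 1/(s-1))"
  have main: "\<forall>x. 1 < x \<and> x < 1 + r \<longrightarrow> (deriv ^^ n) f x = Re ((deriv ^^ n) F (of_real x))"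
  proof (induction n)
    case 0
    show ?case
    proof (intro allI impI)
      fix x assume "1 < x \<and> x < 1 + r"
      then have "F (of_real x) = of_real (f x)" using eq by (simp add: f_def)
      then show "(deriv ^^ 0) f x = Re ((deriv ^^ 0) F (of_real x))" by simp
    qed
  next
    case (Suc n)
    show ?case
    proof (intro allI impI)
      fix x assume x: "1 < x \<and> x < 1 + r"
      define K where "K = (deriv ^^ n) F"
      have Khol: "K holomorphic_on ball 1 r" unfolding K_def using hol by (intro holomorphic_higher_deriv) auto
      have ev: "\<forall>\<^sub>F y in nhds x. (deriv ^^ n) f y = Re (K (of_real y))"
      proof -
        have "\<forall>\<^sub>F y in nhds x. y \<in> {1<..<1+r}"
          using x by (intro eventually_nhds_in_open) auto
        then show ?thesis by eventually_elim (use Suc.IH in \<open>auto simp: K_def\<close>)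
      qed
      have xin: "complex_of_real x \<in> ball 1 r"
      proof -
        have "dist (1::complex) (of_real x) = dist (1::real) x"
          using dist_of_real[of 1 x, where 'a=complex] by simp
        then show ?thesis using x by (simp add: dist_real_def)
      qed
      have "(deriv ^^ Suc n) f x = deriv ((deriv ^^ n) f) x" by simp
      also have "\<dots> = deriv (\<lambda>y. Re (K (of_real y))) x" by (rule deriv_cong_ev[OF ev refl])
      also have "\<dots> = Re (deriv K (of_real x))"
      proof (rule DERIV_imp_deriv)
        have "(K has_field_derivative deriv K (of_real x)) (at (of_real x))"
          by (rule holomorphic_derivI[OF Khol open_ball xin])
        then have "((\<lambda>y. K (of_real y)) has_vector_derivative deriv K (of_real x)) (at x)"
          by (rule has_vector_derivative_real_field)
        then show "((\<lambda>y. Re (K (of_real y))) has_field_derivative Re (deriv K (of_real x))) (at x)"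
          by (rule has_field_derivative_Re)
      qed
      also have "\<dots> = Re ((deriv ^^ Suc n) F (of_real x))" by (simp add: K_def)
      finally show "(deriv ^^ Suc n) f x = Re ((deriv ^^ Suc n) F (of_real x))" .
    qed
  qed
  define K where "K = (deriv ^^ n) F"
  have Khol: "K holomorphic_on ball 1 r" unfolding K_def using hol by (intro holomorphic_higher_deriv) auto
  have "continuous_on (ball 1 r) K" by (rule holomorphic_on_imp_continuous_on[OF Khol])
  then have cK: "isCont K 1"
    by (metis centre_in_ball continuous_on_eq_continuous_at open_ball r)
  have c1: "isCont (\<lambda>y. K (complex_of_real y)) 1"
  proof -
    have "isCont (\<lambda>y::real. complex_of_real y) 1" by (intro continuous_intros)
    from isCont_o2[OF this] show ?thesis using cK by simp
  qed
  have "((\<lambda>y. Re (K (of_real y))) \<longlongrightarrow> Re (K 1)) (at (1::real))"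
    using tendsto_Re[OF c1[unfolded isCont_def]] by simp
  then have t: "((\<lambda>y. Re (K (of_real y))) \<longlongrightarrow> Re (K 1)) (at_right (1::real))"
    using filterlim_at_split by blast
  have ev2: "\<forall>\<^sub>F y in at_right 1. Re (K (of_real y)) = (deriv ^^ n) f y"
  proof -
    have "1 < 1 + r" using r by simp
    from eventually_at_right_real[OF this] show ?thesis
    by eventually_elim (use main in \<open>auto simp: K_def\<close>)
  qed
  have "((deriv ^^ n) f \<longlongrightarrow> Re (K 1)) (at_right 1)"
    using Lim_transform_eventually[OF t ev2] .
  then have "Lim (at_right 1) ((deriv ^^ n) f) = Re (K 1)"
    by (intro tendsto_Lim) auto
  then show ?thesis unfolding stieltjes_def f_def K_def by simp
qed

lemma higher_deriv_powr:
  assumes "w \<noteq> 0"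
  shows "(deriv ^^ n) (\<lambda>z. w powr z) = (\<lambda>z. Ln w ^ n * w powr z)"
proof (induction n)
  case 0 then show ?case by simp
next
  case (Suc n)
  show ?case
  proof
    fix z
    have "((\<lambda>z. Ln w ^ n * w powr z) has_field_derivative Ln w ^ n * (Ln w * w powr z)) (at z)"
      by (intro DERIV_cmult has_field_derivative_powr_right assms)
    then have "deriv (\<lambda>z. Ln w ^ n * w powr z) z = Ln w ^ Suc n * w powr z"
      by (subst DERIV_imp_deriv) (auto simp: mult_ac)
    then show "(deriv ^^ Suc n) (\<lambda>z. w powr z) z = Ln w ^ Suc n * w powr z"
      using Suc.IH by simp
  qed
qed

theorem corollary3:
  shows "((\<lambda>m::nat. stieltjes 1 (1 / real m) + real m * ln (real m))
            \<longlongrightarrow> stieltjes 1 1) sequentially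
       \<and> ((\<lambda>m::nat. stieltjes 2 (1 / real m) - real m * (ln (real m))^2)
            \<longlongrightarrow> stieltjes 2 1) sequentially"
proof -
  obtain G r where r: "0 < r" "r \<le> 1/2" and Ghol: "G holomorphic_on ball 1 r"
    and Geq': "\<forall>s. 1 < s \<and> s < 1 + r \<longrightarrow> G (of_real s) = of_real (hurwitz_zeta_real s 1 - 1/(s-1))"
    using G_exists by blast
  have Geq: "G (of_real s) = of_real (hurwitz_zeta_real s 1 - 1/(s-1))" if "1 < s" "s < 1 + r" for s
    using Geq' that by blast
  define C where "C = 3/2 * (\<Sum>k. real (Suc k) powr (-3/2))"
  have C0: "0 \<le> C" unfolding C_def using summable_Suc32
    by (intro mult_nonneg_nonneg suminf_nonneg) auto
  define D where "D m = Dc (1 + 1/real m) 1" for m :: nat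
  have Dhol: "D m holomorphic_on ball 1 (1/2)" "continuous_on (cball 1 (1/2)) (D m)" for m
    unfolding D_def by (intro Dc_holo; simp)+
  have Dhol_r: "D m holomorphic_on ball 1 r" for m
    using Dhol(1) by (rule holomorphic_on_subset) (use r in auto)
  have st1: "stieltjes n 1 = (-1)^n * Re ((deriv ^^ n) G 1)" for n
    by (rule stieltjes_holo[OF r(1) Ghol]) (rule Geq)
  have stm: "stieltjes n (1 / real m) = (-1)^n * (ln (real m) ^ n * real m + Re ((deriv ^^ n) G 1) + Re ((deriv ^^ n) (D m) 1))"
    if m: "m \<ge> 1" for n m
  proof -
    have m0: "0 < real m" using m by simp
    define F where "F z = (complex_of_real (real m) powr z + G z) + D m z" for z
    have powhol: "(\<lambda>z. complex_of_real (real m) powr z) holomorphic_on ball 1 r"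
      by (intro holomorphic_intros)
    have Fhol: "F holomorphic_on ball 1 r"
      unfolding F_def[abs_def] using powhol Ghol Dhol_r by (intro holomorphic_intros)
    have Feq: "F (of_real x) = of_real (hurwitz_zeta_real x (1/real m) - 1/(x-1))" if x: "1 < x" "x < 1 + r" for x
    proof -
      have mp: "(1/real m) powr (-x) = real m powr x"
        using m0 by (simp add: powr_def ln_div ln_inverse)
      have sh: "hurwitz_zeta_real x (1/real m) = real m powr x + hurwitz_zeta_real x (1/real m + 1)"
        using hz_shift[of x "1/real m"] x m0 mp by simp
      have dd: "D m (of_real x) = of_real (hurwitz_zeta_real x (1 + 1/real m) - hurwitz_zeta_real x 1)"
        unfolding D_def by (rule Dc_real) (use x m0 in \<open>auto intro: add_pos_nonneg\<close>)
      have pw: "complex_of_real (real m) powr (of_real x) = of_real (real m powr x)"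
        by (rule powr_of_real) simp
      have "F (of_real x) = of_real (real m powr x) + of_real (hurwitz_zeta_real x 1 - 1/(x-1))
              + of_real (hurwitz_zeta_real x (1 + 1/real m) - hurwitz_zeta_real x 1)"
        unfolding F_def pw Geq[OF x] dd ..
      also have "\<dots> = of_real (real m powr x + (hurwitz_zeta_real x 1 - 1/(x-1))
              + (hurwitz_zeta_real x (1 + 1/real m) - hurwitz_zeta_real x 1))"
        by (simp only: of_real_add)
      also have "real m powr x + (hurwitz_zeta_real x 1 - 1/(x-1))
              + (hurwitz_zeta_real x (1 + 1/real m) - hurwitz_zeta_real x 1)
             = hurwitz_zeta_real x (1/real m) - 1/(x-1)"
        using sh by (simp add: add.commute)
      finally show ?thesis .
    qed
    have "stieltjes n (1/real m) = (-1)^n * Re ((deriv ^^ n) F 1)"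
      by (rule stieltjes_holo[OF r(1) Fhol]) (rule Feq)
    also have "(deriv ^^ n) F 1 = (deriv ^^ n) (\<lambda>z. complex_of_real (real m) powr z) 1
                  + (deriv ^^ n) G 1 + (deriv ^^ n) (D m) 1"
    proof -
      have 1: "(\<lambda>z. complex_of_real (real m) powr z + G z) holomorphic_on ball 1 r"
        using powhol Ghol by (intro holomorphic_intros)
      have "(deriv ^^ n) F 1 = (deriv ^^ n) (\<lambda>z. complex_of_real (real m) powr z + G z) 1 + (deriv ^^ n) (D m) 1"
        unfolding F_def[abs_def] by (rule higher_deriv_add[OF 1 Dhol_r]) (use r in auto)
      also have "(deriv ^^ n) (\<lambda>z. complex_of_real (real m) powr z + G z) 1
                   = (deriv ^^ n) (\<lambda>z. complex_of_real (real m) powr z) 1 + (deriv ^^ n) G 1"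
        by (rule higher_deriv_add[OF powhol Ghol]) (use r in auto)
      finally show ?thesis .
    qed
    also have "(deriv ^^ n) (\<lambda>z. complex_of_real (real m) powr z) 1 = of_real (ln (real m) ^ n * real m)"
    proof -
      have ne: "complex_of_real (real m) \<noteq> 0" using m by simp
      have "(deriv ^^ n) (\<lambda>z. complex_of_real (real m) powr z) 1
              = Ln (complex_of_real (real m)) ^ n * complex_of_real (real m) powr 1"
        by (simp only: higher_deriv_powr[OF ne])
      also have "Ln (complex_of_real (real m)) = of_real (ln (real m))"
        by (rule Ln_of_real) (use m in simp)
      also have "complex_of_real (real m) powr 1 = complex_of_real (real m)"
        using ne by (metis exp_Ln mult_1 powr_def)
      finally show ?thesis by simp
    qed
    finally show ?thesis by simp
  qed
  have Dlim: "((\<lambda>m. Re ((deriv ^^ n) (D m) 1)) \<longlongrightarrow> 0) sequentially" if n: "0 < n" for n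
  proof (rule Lim_null_comparison)
    show "\<forall>\<^sub>F m in sequentially. norm (Re ((deriv ^^ n) (D m) 1)) \<le> fact n * (C + 1) * 2^n * (1 / real m)"
      using eventually_ge_at_top[of "1::nat"]
    proof eventually_elim
      case (elim m)
      have h0: "0 < 1 / real m" using elim by simp
      have "norm ((deriv ^^ n) (D m) 1) \<le> fact n * ((1/real m) * (C+1)) / (1/2)^n"
      proof (rule Cauchy_higher_deriv_bound[OF Dhol(1) Dhol(2)])
        show "D m w \<in> ball 0 ((1/real m) * (C+1))" if w: "w \<in> ball 1 (1/2)" for w
        proof -
          have "norm (D m w) \<le> (1/real m) * C"
            unfolding D_def C_def using Dc_small[of "1/real m" w] w by auto
          also have "\<dots> < (1/real m) * (C+1)" using h0 by (intro mult_strict_left_mono) auto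
          finally show ?thesis by simp
        qed
      qed (use n in auto)
      moreover have "fact n * ((1/real m) * (C+1)) / (1/2)^n = fact n * (C + 1) * 2^n * (1/real m)"
        by (simp add: power_one_over field_simps)
      moreover have "norm (Re ((deriv ^^ n) (D m) 1)) \<le> norm ((deriv ^^ n) (D m) 1)"
        by (simp add: abs_Re_le_cmod)
      ultimately show ?case by linarith
    qed
    show "((\<lambda>m. fact n * (C + 1) * 2^n * (1 / real m)) \<longlongrightarrow> 0) sequentially"
      by (intro tendsto_mult_right_zero lim_1_over_n)
  qed
  have e1: "\<forall>\<^sub>F m in sequentially. stieltjes 1 1 - Re ((deriv ^^ 1) (D m) 1)
              = stieltjes 1 (1 / real m) + real m * ln (real m)"
    using eventually_ge_at_top[of "1::nat"]
  proof eventually_elim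
    case (elim m)
    show ?case using stm[OF elim, of 1] st1[of 1] by (simp add: algebra_simps)
  qed
  have e2: "\<forall>\<^sub>F m in sequentially. stieltjes 2 1 + Re ((deriv ^^ 2) (D m) 1)
              = stieltjes 2 (1 / real m) - real m * (ln (real m))^2"
    using eventually_ge_at_top[of "1::nat"]
  proof eventually_elim
    case (elim m)
    show ?case using stm[OF elim, of 2] st1[of 2] by (simp add: algebra_simps)
  qed
  have "((\<lambda>m. stieltjes 1 1 - Re ((deriv ^^ 1) (D m) 1)) \<longlongrightarrow> stieltjes 1 1 - 0) sequentially"
    by (intro tendsto_diff tendsto_const Dlim) simp
  then have l1: "((\<lambda>m::nat. stieltjes 1 (1 / real m) + real m * ln (real m)) \<longlongrightarrow> stieltjes 1 1) sequentially"
    using Lim_transform_eventually[OF _ e1] by simp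
  have "((\<lambda>m. stieltjes 2 1 + Re ((deriv ^^ 2) (D m) 1)) \<longlongrightarrow> stieltjes 2 1 + 0) sequentially"
    by (intro tendsto_add tendsto_const Dlim) simp
  then have l2: "((\<lambda>m::nat. stieltjes 2 (1 / real m) - real m * (ln (real m))^2) \<longlongrightarrow> stieltjes 2 1) sequentially"
    using Lim_transform_eventually[OF _ e2] by simp
  from l1 l2 show ?thesis ..
qed

end
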